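(* Let $a>1$ be fixed. For each $w$ on the unit circle, let $D_w$ be the line $$ (a-w)z+w^3(wa-1)\overline{z}+2w^2a^2-3w(w^2+1)a+4w^2=0 $$ (the directrix of the parabola with focus $a$ tangent to the unit circle at $w$). As $w$ ranges over the unit circle, the envelope of the family of lines $\{D_w\}$ is given by the equation $$ z^2\overline{z}^2-2(a^2+2)z\overline{z}+4a(z+\overline{z})+a^4-4a^2=0. $$
   Context: The variable $z$ ranges over $\mathbb{C}\cong\mathbb{R}^2$ and $\overline{z}$ denotes its complex conjugate. The envelope of a one-parameter family of curves is the curve tangent to each member of the family. *)

theory Defs
  imports "HOL-Analysis.Analysis"
begin

definition envelope :: "(real \<Rightarrow> complex \<Rightarrow> complex) \<Rightarrow> complex set" where
  "envelope F = {z. \<exists>t. F t z = 0 \<and> ((\<lambda>s. F s z) has_vector_derivative 0) (at t)}"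

definition directrix :: "real \<Rightarrow> complex \<Rightarrow> complex \<Rightarrow> complex" where
  "directrix a w z = (of_real a - w) * z + w^3 * (w * of_real a - 1) * cnj z
     + 2 * w^2 * (of_real a)^2 - 3 * w * (w^2 + 1) * of_real a + 4 * w^2"

end

theory Submission
  imports Defs
begin

definition Gd :: "real \<Rightarrow> complex \<Rightarrow> complex \<Rightarrow> complex" where
  "Gd a w z = - z + (4 * of_real a * w^3 - 3 * w^2) * cnj z + 4 * (of_real a)^2 * w
     - 3 * of_real a * (3 * w^2 + 1) + 8 * w"

lemma cis_vd: "(cis has_vector_derivative (\<i> * cis t)) (at t)"
proof -
  have "((\<lambda>x. cis x) has_derivative (\<lambda>s. s *\<^sub>R (\<i> * cis t))) (at t)"
    using has_derivative_cis[OF has_derivative_ident[of "at t"]] by simp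
  then show ?thesis by (simp add: has_vector_derivative_def)
qed

lemma deriv_dir:
  "((\<lambda>s. directrix a (cis s) z) has_vector_derivative (\<i> * cis t * Gd a (cis t) z)) (at t)"
proof -
  have g: "((\<lambda>w. directrix a w z) has_field_derivative Gd a w z) (at w)" for w
    unfolding directrix_def Gd_def
    by (rule derivative_eq_intros refl | simp)+ (simp add: algebra_simps power2_eq_square power3_eq_cube)
  from field_vector_diff_chain_at[OF cis_vd g]
  show ?thesis by (simp add: o_def)
qed

lemma unit_mult_cnj: "norm w = 1 \<Longrightarrow> w * cnj w = 1"
  using complex_norm_square[of w] by simp

lemma det_nz:
  assumes a: "a > 1" and w: "norm (w::complex) = 1"
  shows "4 * (of_real a)^2 * w + 2 * w - 3 * of_real a - 3 * of_real a * w^2 \<noteq> 0"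
proof
  assume h: "4 * (of_real a)^2 * w + 2 * w - 3 * of_real a - 3 * of_real a * w^2 = 0"
  have wc: "w * cnj w = 1" using unit_mult_cnj[OF w] .
  have "cnj w * (4 * (of_real a)^2 * w + 2 * w - 3 * of_real a - 3 * of_real a * w^2) =
        4 * (of_real a)^2 + 2 - 3 * of_real a * (w + cnj w)"
    using wc by algebra
  also have "\<dots> = of_real (4 * a^2 + 2 - 6 * a * Re w)"
    by (simp add: complex_add_cnj)
  finally have "4 * a^2 + 2 - 6 * a * Re w = 0" using h by (metis mult_zero_right of_real_eq_0_iff)
  moreover have "Re w \<le> 1" using complex_Re_le_cmod[of w] w by simp
  ultimately have "4 * a^2 + 2 - 6 * a \<le> 0" using a
    mult_left_mono[of "Re w" 1 "6*a"] by simp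
  moreover have "4 * a^2 + 2 - 6 * a = 2 * (2*a - 1) * (a - 1)" by (simp add: algebra_simps power2_eq_square)
  moreover have "2 * (2*a - 1) * (a - 1) > 0" using a by simp
  ultimately show False by simp
qed

lemma forward_sol:
  assumes a: "a > 1" and w: "norm (w::complex) = 1"
    and F: "directrix a w z = 0" and G: "Gd a w z = 0"
  shows "z = 2 * w - of_real a * w^2"
proof -
  define A where "A = complex_of_real a"
  define cw where "cw = cnj w"
  define cz where "cz = cnj z"
  have wc: "w * cw = 1" using unit_mult_cnj[OF w] cw_def by simp
  define d where "d = z - (2 * w - A * w^2)"
  define e where "e = cz - (2 * cw - A * cw^2)"
  have F': "(A - w) * z + w^3 * (w * A - 1) * cz + 2 * w^2 * A^2 - 3 * w * (w^2 + 1) * A + 4 * w^2 = 0"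
    using F unfolding directrix_def A_def cz_def .
  have G': "- z + (4 * A * w^3 - 3 * w^2) * cz + 4 * A^2 * w - 3 * A * (3 * w^2 + 1) + 8 * w = 0"
    using G unfolding Gd_def A_def cz_def .
  have e1: "(A - w) * d + w^3 * (w * A - 1) * e = 0"
    using F' wc unfolding d_def e_def by algebra
  have e2: "- d + (4 * A * w^3 - 3 * w^2) * e = 0"
    using G' wc unfolding d_def e_def by algebra
  have "e * (w^2 * (4 * A^2 * w + 2 * w - 3 * A - 3 * A * w^2)) = 0"
    using e1 e2 by algebra
  moreover have "w \<noteq> 0" using w by auto
  ultimately have "e = 0" using det_nz[OF a w] unfolding A_def by simp
  then have "d = 0" using e2 by simp
  then show ?thesis unfolding d_def A_def by simp
qed


lemma backward_eqs:
  assumes w: "norm (w::complex) = 1" and z: "z = 2 * w - of_real a * w^2"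
  shows "directrix a w z = 0" "Gd a w z = 0"
    "z^2 * (cnj z)^2 - 2 * (of_real a^2 + 2) * z * cnj z + 4 * of_real a * (z + cnj z)
        + of_real a ^ 4 - 4 * of_real a ^ 2 = 0"
proof -
  define A where "A = complex_of_real a"
  have wc: "w * cnj w = 1" using unit_mult_cnj[OF w] by simp
  have cz: "cnj z = 2 * cnj w - A * (cnj w)^2" using z unfolding A_def by simp
  show "directrix a w z = 0" unfolding directrix_def A_def[symmetric]
    using wc z cz unfolding A_def[symmetric] by algebra
  show "Gd a w z = 0" unfolding Gd_def A_def[symmetric]
    using wc z cz unfolding A_def[symmetric] by algebra
  show "z^2 * (cnj z)^2 - 2 * (of_real a^2 + 2) * z * cnj z + 4 * of_real a * (z + cnj z)
        + of_real a ^ 4 - 4 * of_real a ^ 2 = 0" unfolding A_def[symmetric]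
    using wc z cz unfolding A_def[symmetric] by algebra
qed

lemma quartic_sol:
  assumes a: "a > 1"
    and Q: "z^2 * (cnj z)^2 - 2 * (of_real a^2 + 2) * z * cnj z + 4 * of_real a * (z + cnj z)
        + of_real a ^ 4 - 4 * of_real a ^ 2 = 0"
  shows "\<exists>w. norm w = 1 \<and> z = 2 * w - of_real a * w^2"
proof (cases "z = of_real a")
  case True
  define w where "w = Complex (1/a) (sqrt (a^2 - 1) / a)"
  have s: "(sqrt (a^2 - 1))^2 = a^2 - 1" using a by simp
  have "norm w = 1" unfolding w_def cmod_def using a s
    by (simp add: power_divide add_divide_distrib[symmetric])
  moreover have "z = 2 * w - of_real a * w^2"
    unfolding True w_def using a s
    by (simp add: complex_eq_iff power2_eq_square field_simps)
  ultimately show ?thesis by blast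
next
  case False
  define A where "A = complex_of_real a"
  define cz where "cz = cnj z"
  have nz: "A - cz \<noteq> 0" using False unfolding A_def cz_def
    by (metis complex_cnj_cnj complex_cnj_complex_of_real eq_iff_diff_eq_0)
  have nz': "A - z \<noteq> 0" using False unfolding A_def by simp
  have nz2: "2*A - 2*cz \<noteq> 0" "2*A - 2*z \<noteq> 0" using nz nz' by auto
  define w where "w = (A^2 - z * cz) / (2 * (A - cz))"
  have cw: "cnj w = (A^2 - z * cz) / (2 * (A - z))"
    unfolding w_def A_def cz_def by simp
  have Q': "z^2 * cz^2 - 2 * (A^2 + 2) * z * cz + 4 * A * (z + cz) + A ^ 4 - 4 * A ^ 2 = 0"
    using Q unfolding A_def cz_def by simp
  have wc: "w * cnj w = 1"
  proof -
    have "(A^2 - z * cz) * (A^2 - z * cz) = (2 * (A - cz)) * (2 * (A - z))"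
      using Q' by algebra
    then have "((A^2 - z*cz)/(2*(A - cz))) * ((A^2 - z*cz)/(2*(A - z))) = 1"
    proof -
      have d0: "(2 * (A - cz)) * (2 * (A - z)) \<noteq> 0" using nz nz' by simp
      have "((A^2 - z*cz)/(2*(A - cz))) * ((A^2 - z*cz)/(2*(A - z))) =
        ((A^2 - z * cz) * (A^2 - z * cz)) / ((2 * (A - cz)) * (2 * (A - z)))" by simp
      also have "\<dots> = 1" using d0 \<open>(A^2 - z * cz) * (A^2 - z * cz) = (2 * (A - cz)) * (2 * (A - z))\<close> by simp
      finally show ?thesis .
    qed
    then show ?thesis using cw unfolding w_def by simp
  qed
  have nw: "norm w = 1"
  proof -
    have "complex_of_real ((norm w)^2) = 1" using wc complex_norm_square[of w] by simp
    then have "(norm w)^2 = 1" by (metis of_real_eq_1_iff)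
    then have "norm w = 1 \<or> norm w = - 1" by (simp add: power2_eq_1_iff)
    then show ?thesis using norm_ge_zero[of w] by linarith
  qed
  define k where "k = (A^2 - z * cz) / 2"
  have "(A - cz) * w = k" unfolding w_def k_def using nz nz2 by (simp add: field_simps)
  then have h1: "A * w - cz * w = k" by (simp add: algebra_simps)
  have "(A - z) * cnj w = k" unfolding cw k_def using nz' nz2 by (simp add: field_simps)
  then have h2: "A * cnj w - z * cnj w = k" by (simp add: algebra_simps)
  have "k * (k + 2 - A * (w + cnj w)) = 0"
  proof -
    have k2: "2 * k = A^2 - z * cz" unfolding k_def by simp
    have v1: "cz * w = A * w - k" using h1 by (simp add: algebra_simps)
    have v2: "z * cnj w = A * cnj w - k" using h2 by (simp add: algebra_simps)
    have "z * cz = (cz * w) * (z * cnj w)" using wc by (simp add: algebra_simps)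
    also have "\<dots> = (A * w - k) * (A * cnj w - k)" using v1 v2 by simp
    finally have "2 * k = A^2 - (A * w - k) * (A * cnj w - k)" using k2 by simp
    then show ?thesis using wc by algebra
  qed
  moreover have "k \<noteq> 0"
  proof
    assume "k = 0"
    then have "(A - cz) * w = 0" using h1 by (simp add: algebra_simps)
    moreover have "w \<noteq> 0" using nw by auto
    ultimately show False using nz by simp
  qed
  ultimately have "k + 2 - A * (w + cnj w) = 0" by simp
  then have "k = A * (w + cnj w) - 2" by (simp add: algebra_simps)
  then have "z = 2 * w - A * w^2" using h2 wc by algebra
  then show ?thesis using nw unfolding A_def by blast
qed

theorem proposition4p3:
  fixes a :: real
  assumes "a > 1"
  shows "envelope (\<lambda>t z. directrix a (cis t) z) =
    {z. z^2 * (cnj z)^2 - 2 * (of_real a^2 + 2) * z * cnj z + 4 * of_real a * (z + cnj z)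
        + of_real a ^ 4 - 4 * of_real a ^ 2 = 0}"
proof (rule set_eqI, rule iffI)
  fix z assume "z \<in> envelope (\<lambda>t z. directrix a (cis t) z)"
  then obtain t where F: "directrix a (cis t) z = 0"
    and D: "((\<lambda>s. directrix a (cis s) z) has_vector_derivative 0) (at t)"
    unfolding envelope_def by auto
  have "\<i> * cis t * Gd a (cis t) z = 0"
    using vector_derivative_unique_at[OF deriv_dir D] .
  then have G: "Gd a (cis t) z = 0" by simp
  have "z = 2 * cis t - of_real a * (cis t)^2"
    using forward_sol[OF assms _ F G] by simp
  from backward_eqs(3)[OF _ this] show "z \<in> {z. z^2 * (cnj z)^2 - 2 * (of_real a^2 + 2) * z * cnj z + 4 * of_real a * (z + cnj z)
        + of_real a ^ 4 - 4 * of_real a ^ 2 = 0}" by simp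
next
  fix z assume "z \<in> {z. z^2 * (cnj z)^2 - 2 * (of_real a^2 + 2) * z * cnj z + 4 * of_real a * (z + cnj z)
        + of_real a ^ 4 - 4 * of_real a ^ 2 = 0}"
  then obtain w where w: "norm w = 1" and zw: "z = 2 * w - of_real a * w^2"
    using quartic_sol[OF assms] by auto
  have "w \<noteq> 0" using w by auto
  then have cw: "cis (Arg w) = w" using w cis_Arg[of w] by (simp add: sgn_div_norm)
  have "directrix a (cis (Arg w)) z = 0" "Gd a (cis (Arg w)) z = 0"
    using backward_eqs[OF w zw] cw by auto
  with deriv_dir[of a z "Arg w"] show "z \<in> envelope (\<lambda>t z. directrix a (cis t) z)"
    unfolding envelope_def by auto
qed

end
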